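(* Let $G$ be a compact group, $H$ a normal subgroup, $K=G/H$ with quotient map $g\mapsto[g]$. Let $(l_n)_{n\in\mathbb{N}}$ be continuous length functions on $G$ converging uniformly on $G$ to $\widetilde{l_\infty}$ with $\widetilde{l_\infty}(g)=0$ for $g\in H$ and $\widetilde{l_\infty}(g)>0$ for $g\notin H$, and let $l_\infty$ be the function on $K$ defined by $l_\infty([g])=\widetilde{l_\infty}(g)$. For $n\in\mathbb{N}$ define $l_n^K([g])=\inf\{l_n(g'):g'\in G,\ [g']=[g]\}$. Then each $l_n^K$ is continuous on $K$, and $(l_n^K)_{n\in\mathbb{N}}$ converges uniformly on $K$ to $l_\infty$.
   Context: A length function on a group with unit $e$: $l\ge0$, $l(g)=0$ iff $g=e$, $l(g^{-1})=l(g)$, $l(gh)\le l(g)+l(h)$. *)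

theory Defs
  imports "HOL-Analysis.Analysis"
begin

text \<open>Groups are written additively (class group_add, not necessarily commutative);
  the unit is 0.\<close>

definition length_fun :: "('a::group_add \<Rightarrow> real) \<Rightarrow> bool" where
  "length_fun l \<longleftrightarrow> (\<forall>g. l g \<ge> 0) \<and> (\<forall>g. l g = 0 \<longleftrightarrow> g = 0) \<and>
     (\<forall>g. l (- g) = l g) \<and> (\<forall>g h. l (g + h) \<le> l g + l h)"

definition normal_subgroup :: "'a::group_add set \<Rightarrow> bool" where
  "normal_subgroup H \<longleftrightarrow> 0 \<in> H \<and> (\<forall>x\<in>H. \<forall>y\<in>H. x + y \<in> H) \<and> (\<forall>x\<in>H. - x \<in> H) \<and>
     (\<forall>g. \<forall>h\<in>H. g + h - g \<in> H)"

text \<open>The quotient map g \<mapsto> [g] = gH and the quotient K = G/H as the set of cosets.\<close>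

definition qcoset :: "'a::group_add set \<Rightarrow> 'a \<Rightarrow> 'a set" where
  "qcoset H g = (\<lambda>h. g + h) ` H"

definition qspace :: "'a::group_add set \<Rightarrow> 'a set set" where
  "qspace H = range (qcoset H)"

definition qtop :: "'a::{group_add,topological_space} set \<Rightarrow> 'a set topology" where
  "qtop H = topology (\<lambda>U. U \<subseteq> qspace H \<and> open (qcoset H -` U))"

end

theory Submission
  imports Defs
begin

lemma qcoset_add: "qcoset H (a + b) = (\<lambda>x. a + x) ` qcoset H b"
  unfolding qcoset_def by (auto simp: image_image add.assoc)

lemma qtop_open:
  "openin (qtop H) U \<longleftrightarrow> U \<subseteq> qspace H \<and> open (qcoset H -` U)"
proof -
  have "istopology (\<lambda>U. U \<subseteq> qspace H \<and> open (qcoset H -` U))"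
    unfolding istopology_def by (auto simp: vimage_Union open_Int intro!: open_Union)
  then show ?thesis unfolding qtop_def by simp
qed

lemma qtop_topspace: "topspace (qtop H) = qspace H"
proof -
  have "qcoset H -` qspace H = UNIV" unfolding qspace_def by auto
  then have "openin (qtop H) (qspace H)" unfolding qtop_open by auto
  then show ?thesis unfolding topspace_def using qtop_open by auto
qed

theorem mainTheorem17:
  fixes H :: "'a::{topological_group_add, t2_space} set"
    and l :: "nat \<Rightarrow> 'a \<Rightarrow> real"
    and lt :: "'a \<Rightarrow> real"
    and linf :: "'a set \<Rightarrow> real"
    and lK :: "nat \<Rightarrow> 'a set \<Rightarrow> real"
  assumes compact_G: "compact (UNIV :: 'a set)"
    and normal: "normal_subgroup H"
    and len: "\<And>n. length_fun (l n)"
    and cont: "\<And>n. continuous_on UNIV (l n)"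
    and unif: "uniform_limit UNIV l lt sequentially"
    and lt_H: "\<And>g. g \<in> H \<Longrightarrow> lt g = 0"
    and lt_notH: "\<And>g. g \<notin> H \<Longrightarrow> lt g > 0"
    and linf_def: "\<And>g. linf (qcoset H g) = lt g"
    and lK_def: "\<And>n g. lK n (qcoset H g) = Inf {l n g' | g'. qcoset H g' = qcoset H g}"
  shows "(\<forall>n. continuous_map (qtop H) euclideanreal (lK n)) \<and>
         uniform_limit (qspace H) lK linf sequentially"
proof
  have lb: "\<And>n g. lK n (qcoset H g) \<le> l n g"
  proof -
    fix n g
    show "lK n (qcoset H g) \<le> l n g" unfolding lK_def
      by (rule cInf_lower) (auto intro!: bdd_belowI[where m=0] simp: len[unfolded length_fun_def])
  qed
  have key: "lK n (qcoset H g') \<le> l n (g' - g) + lK n (qcoset H g)" for n g g'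
  proof -
    have "lK n (qcoset H g') - l n (g' - g) \<le> Inf {l n g2 | g2. qcoset H g2 = qcoset H g}"
    proof (rule cInf_greatest)
      show "{l n g2 | g2. qcoset H g2 = qcoset H g} \<noteq> {}" by auto
    next
      fix x assume "x \<in> {l n g2 | g2. qcoset H g2 = qcoset H g}"
      then obtain g2 where x: "x = l n g2" and q: "qcoset H g2 = qcoset H g" by auto
      have "qcoset H (g' - g + g2) = qcoset H g'"
        using q by (simp add: qcoset_add[of H "g' - g" g2] qcoset_add[of H "g' - g" g, symmetric] add.assoc)
      then have "lK n (qcoset H g') \<le> l n (g' - g + g2)" using lb by metis
      also have "\<dots> \<le> l n (g' - g) + l n g2" using len[of n] unfolding length_fun_def by blast
      finally show "lK n (qcoset H g') - l n (g' - g) \<le> x" using x by simp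
    qed
    then show ?thesis using lK_def[of n g] by simp
  qed
  show "\<forall>n. continuous_map (qtop H) euclideanreal (lK n)"
  proof
    fix n
    define f where "f = (\<lambda>g. lK n (qcoset H g))"
    have "isCont f g" for g
    proof -
      have l0: "l n 0 = 0" using len[of n] unfolding length_fun_def by blast
      have "((\<lambda>g'. g' - g) \<longlongrightarrow> g - g) (at g)" by (intro tendsto_intros)
      moreover have "isCont (l n) (g - g)" using cont[of n] by (simp add: continuous_on_eq_continuous_at)
      ultimately have "((\<lambda>g'. l n (g' - g)) \<longlongrightarrow> l n (g - g)) (at g)"
        using isCont_tendsto_compose by blast
      then have t: "((\<lambda>g'. l n (g' - g)) \<longlongrightarrow> 0) (at g)" using l0 by simp
      have "\<And>g'. norm (f g' - f g) \<le> l n (g' - g)"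
      proof -
        fix g'
        have a: "f g' - f g \<le> l n (g' - g)" using key[of n g' g] unfolding f_def by simp
        have "f g - f g' \<le> l n (g - g')" using key[of n g g'] unfolding f_def by simp
        moreover have "l n (g - g') = l n (g' - g)"
          using len[of n] unfolding length_fun_def by (metis minus_diff_eq)
        ultimately show "norm (f g' - f g) \<le> l n (g' - g)" using a by simp
      qed
      then have "((\<lambda>g'. f g' - f g) \<longlongrightarrow> 0) (at g)"
        by (intro Lim_null_comparison[OF _ t]) simp
      then show ?thesis unfolding isCont_def by (simp add: LIM_zero_iff)
    qed
    then have cf: "continuous_on UNIV f" by (simp add: continuous_at_imp_continuous_on)
    show "continuous_map (qtop H) euclideanreal (lK n)"
      unfolding continuous_map_def qtop_topspace
    proof (intro conjI allI impI)
      show "lK n \<in> qspace H \<rightarrow> topspace euclideanreal" by simp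
    next
      fix U :: "real set" assume "openin euclideanreal U"
      then have oU: "open U" by simp
      have "qcoset H -` {x \<in> qspace H. lK n x \<in> U} = f -` U"
        unfolding f_def qspace_def by auto
      moreover have "open (f -` U)" using cf oU by (simp add: continuous_on_open_vimage)
      ultimately show "openin (qtop H) {x \<in> qspace H. lK n x \<in> U}"
        unfolding qtop_open by auto
    qed
  qed
  show "uniform_limit (qspace H) lK linf sequentially"
    unfolding uniform_limit_iff
  proof (intro allI impI)
    fix e :: real assume e: "e > 0"
    then have e2: "e/2 > 0" by simp
    have "\<forall>\<^sub>F n in sequentially. \<forall>x\<in>UNIV. dist (l n x) (lt x) < e/2"
      using unif[unfolded uniform_limit_iff, rule_format, OF e2] .
    then show "\<forall>\<^sub>F n in sequentially. \<forall>x\<in>qspace H. dist (lK n x) (linf x) < e"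
    proof eventually_elim
      case (elim n)
      show ?case
      proof
        fix x assume "x \<in> qspace H"
        then obtain g where xg: "x = qcoset H g" unfolding qspace_def by auto
        have up: "lK n x \<le> l n g" using lb xg by simp
        have "lt g - e/2 \<le> Inf {l n g' | g'. qcoset H g' = qcoset H g}"
        proof (rule cInf_greatest)
          show "{l n g' | g'. qcoset H g' = qcoset H g} \<noteq> {}" by auto
        next
          fix y assume "y \<in> {l n g' | g'. qcoset H g' = qcoset H g}"
          then obtain g' where y: "y = l n g'" and q: "qcoset H g' = qcoset H g" by auto
          have "lt g' = lt g" using linf_def[of g'] linf_def[of g] q by simp
          moreover have "dist (l n g') (lt g') < e/2" using elim by simp
          ultimately show "lt g - e/2 \<le> y" using y unfolding dist_real_def by linarith
        qed
        then have lo: "lt g - e/2 \<le> lK n x" using xg lK_def by simp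
        have "dist (l n g) (lt g) < e/2" using elim by simp
        then have h: "l n g < lt g + e/2" unfolding dist_real_def abs_less_iff by linarith
        have "linf x = lt g" using xg linf_def by simp
        then show "dist (lK n x) (linf x) < e" using up lo e h
          unfolding dist_real_def abs_less_iff by linarith
      qed
    qed
  qed
qed

end
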